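(* Let $\langle\mathcal{D},\sigma,\varphi\rangle$ be a hybrid temporal achievement causal setting. Then $$\mathcal{D}\models\mathit{AchvSit}(s_\varphi,\varphi,\sigma)\land\sigma<s^*\land\big(\forall s',t.\;\sigma\le s'\le s^*\land\mathit{start}(s')\le t\le\mathit{end}(s',s^* )\supset\varphi[t,s']\big)\supset\mathit{AchvSit}(s_\varphi,\varphi,s^* )$$ (free variables $s_\varphi,s^*$ universally quantified).
   Context: Hybrid temporal situation calculus (HTSC): $S_0$ initial situation, $do(a,s)$ successor situation, $do([a_1,\dots,a_n],s)$ the nesting. $s\sqsubset s'$: $s'$ reachable from $s$ by one or more actions; $s\sqsubseteq s'$: $s\sqsubset s'\lor s=s'$. $\mathit{time}(a(\vec x,t))=t$, $\mathit{start}(do(a,s))=\mathit{time}(a)$. $\mathit{Exec}(s)\doteq\forall a,s'.(do(a,s')\sqsubseteq s\supset\mathit{Poss}(a,s')\land\mathit{start}(s')\le\mathit{time}(a))$; $s<s'$ abbreviates $s\sqsubset s'\land\mathit{Exec}(s')$; $s\le s'$ abbreviates $s<s'\lor s=s'$. A hybrid basic action theory $\mathcal{D}$ contains initial-state, precondition, successor-state (discrete fluents), state evolution (temporal fluents), unique-names and foundational axioms; each temporal fluent $f$ has a state evolution axiom $f(\vec x,t,s)=y\equiv[\bigvee_i(\gamma^f_i(\vec x,s)\land\delta_i(\vec x,y,t,s))\lor(y=f(\vec x,\mathit{start}(s),s)\land\neg\bigvee_i\gamma^f_i(\vec x,s))]$ with mutually exclusive contexts $\gamma^f_i$. An effect $\varphi$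 is a situation- and time-suppressed formula, uniform in the situation, constraining the value of a single primitive temporal fluent $f$; $\varphi[t,s]$ restores time $t$ and situation $s$. $\mathit{end}(s',s)=\mathit{start}(s')$ if $s'=s$; $=\mathit{time}(a)$ if $do(a,s')\le s$. $\mathit{AchvSitAux}(s_\varphi,\varphi,s)\doteq\varphi[\mathit{end}(s_\varphi,s),s_\varphi]\land\forall s',t.(s_\varphi<s'\le s\land\mathit{start}(s')\le t\le\mathit{end}(s',s)\supset\varphi[t,s'])$; $\mathit{AchvSit}(s_\varphi,\varphi,s)\doteq\mathit{AchvSitAux}(s_\varphi,\varphi,s)\land\neg\exists s''.(s''<s_\varphi\land\mathit{AchvSitAux}(s'',\varphi,s))$. Hybrid temporal achievement causal setting $\langle\mathcal{D},\sigma,\varphi\rangle$: $\sigma=do([\alpha_1,\dots,\alpha_n],S_0)$ ground, $n\ge1$, and $\mathcal{D}\models\mathit{Exec}(\sigma)\land\neg\varphi[\mathit{start}(S_0),S_0]\land\neg\varphi[\mathit{time}(\alpha_1),S_0]\land\varphi[\mathit{start}(\sigma),\sigma]$. *)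

theory Defs
  imports Main "HOL.Real"
begin

text \<open>Situations of the (hybrid temporal) situation calculus. The foundational
axioms (including second-order induction) force the situations of every model to
form exactly this tree: S0 and do(a,s).\<close>

datatype 'a sit = S0 | Do 'a "'a sit"

fun sqsub :: "'a sit \<Rightarrow> 'a sit \<Rightarrow> bool" where
  "sqsub s S0 = False"
| "sqsub s (Do a s') = (s = s' \<or> sqsub s s')"

definition sqsubeq :: "'a sit \<Rightarrow> 'a sit \<Rightarrow> bool" where
  "sqsubeq s s' \<longleftrightarrow> sqsub s s' \<or> s = s'"

text \<open>start(S0) = t0 (the start time of the initial situation), start(do(a,s)) = time(a).
  tm interprets the function time on actions.\<close>
fun start :: "real \<Rightarrow> ('a \<Rightarrow> real) \<Rightarrow> 'a sit \<Rightarrow> real" where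
  "start t0 tm S0 = t0"
| "start t0 tm (Do a s) = tm a"

definition Exec :: "('a \<Rightarrow> 'a sit \<Rightarrow> bool) \<Rightarrow> real \<Rightarrow> ('a \<Rightarrow> real) \<Rightarrow> 'a sit \<Rightarrow> bool" where
  "Exec Poss t0 tm s \<longleftrightarrow>
     (\<forall>a s'. sqsubeq (Do a s') s \<longrightarrow> Poss a s' \<and> start t0 tm s' \<le> tm a)"

definition slt :: "('a \<Rightarrow> 'a sit \<Rightarrow> bool) \<Rightarrow> real \<Rightarrow> ('a \<Rightarrow> real) \<Rightarrow> 'a sit \<Rightarrow> 'a sit \<Rightarrow> bool" where
  "slt Poss t0 tm s s' \<longleftrightarrow> sqsub s s' \<and> Exec Poss t0 tm s'"

definition sle :: "('a \<Rightarrow> 'a sit \<Rightarrow> bool) \<Rightarrow> real \<Rightarrow> ('a \<Rightarrow> real) \<Rightarrow> 'a sit \<Rightarrow> 'a sit \<Rightarrow> bool" where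
  "sle Poss t0 tm s s' \<longleftrightarrow> slt Poss t0 tm s s' \<or> s = s'"

text \<open>end(s',s): start(s') if s' = s; time(a) if do(a,s') \<le> s (such a is unique).
  Outside this domain the value is an unspecified (but fixed) real.\<close>
definition endt :: "('a \<Rightarrow> 'a sit \<Rightarrow> bool) \<Rightarrow> real \<Rightarrow> ('a \<Rightarrow> real) \<Rightarrow> 'a sit \<Rightarrow> 'a sit \<Rightarrow> real" where
  "endt Poss t0 tm s' s =
     (if s' = s then start t0 tm s'
      else tm (THE a. sle Poss t0 tm (Do a s') s))"

text \<open>phi t s stands for the effect with time t and situation s restored, \<open>\<phi>[t,s]\<close>.\<close>
definition AchvSitAux ::
  "('a \<Rightarrow> 'a sit \<Rightarrow> bool) \<Rightarrow> real \<Rightarrow> ('a \<Rightarrow> real) \<Rightarrow> (real \<Rightarrow> 'a sit \<Rightarrow> bool)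
   \<Rightarrow> 'a sit \<Rightarrow> 'a sit \<Rightarrow> bool" where
  "AchvSitAux Poss t0 tm phi sphi s \<longleftrightarrow>
     phi (endt Poss t0 tm sphi s) sphi \<and>
     (\<forall>s' t. slt Poss t0 tm sphi s' \<and> sle Poss t0 tm s' s \<and>
             start t0 tm s' \<le> t \<and> t \<le> endt Poss t0 tm s' s \<longrightarrow> phi t s')"

definition AchvSit ::
  "('a \<Rightarrow> 'a sit \<Rightarrow> bool) \<Rightarrow> real \<Rightarrow> ('a \<Rightarrow> real) \<Rightarrow> (real \<Rightarrow> 'a sit \<Rightarrow> bool)
   \<Rightarrow> 'a sit \<Rightarrow> 'a sit \<Rightarrow> bool" where
  "AchvSit Poss t0 tm phi sphi s \<longleftrightarrow>
     AchvSitAux Poss t0 tm phi sphi s \<and>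
     \<not> (\<exists>s''. slt Poss t0 tm s'' sphi \<and> AchvSitAux Poss t0 tm phi s'' s)"

text \<open>Hybrid temporal achievement causal setting: sigma = do([alpha_1,...,alpha_n],S0), n \<ge> 1,
  executable, phi false at start(S0) and at time(alpha_1) in S0, true at start(sigma) in sigma.\<close>
definition CausalSetting ::
  "('a \<Rightarrow> 'a sit \<Rightarrow> bool) \<Rightarrow> real \<Rightarrow> ('a \<Rightarrow> real) \<Rightarrow> (real \<Rightarrow> 'a sit \<Rightarrow> bool)
   \<Rightarrow> 'a sit \<Rightarrow> bool" where
  "CausalSetting Poss t0 tm phi sigma \<longleftrightarrow>
     sigma \<noteq> S0 \<and>
     Exec Poss t0 tm sigma \<and>
     \<not> phi (start t0 tm S0) S0 \<and>
     (\<forall>a1. sqsubeq (Do a1 S0) sigma \<longrightarrow> \<not> phi (tm a1) S0) \<and>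
     phi (start t0 tm sigma) sigma"

end

theory Submission
  imports Defs
begin

lemma sqsub_size: "sqsub s x \<Longrightarrow> size s < size x"
  by (induction x) auto

lemma sqsub_irrefl: "\<not> sqsub s s"
  using sqsub_size by blast

lemma sqsub_trans: "sqsub a b \<Longrightarrow> sqsub b c \<Longrightarrow> sqsub a c"
  by (induction c) auto

lemma sqsubeq_trans: "sqsubeq a b \<Longrightarrow> sqsubeq b c \<Longrightarrow> sqsubeq a c"
  unfolding sqsubeq_def using sqsub_trans by blast

lemma sqsub_Do: "sqsubeq (Do a s) x \<Longrightarrow> sqsub s x"
  unfolding sqsubeq_def using sqsub_trans[of s "Do a s" x] by auto

lemma sqsub_ex: "sqsub s x \<Longrightarrow> \<exists>a. sqsubeq (Do a s) x"
  by (induction x) (auto simp: sqsubeq_def)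

lemma total: "sqsubeq a c \<Longrightarrow> sqsubeq b c \<Longrightarrow> sqsubeq a b \<or> sqsubeq b a"
proof (induction c)
  case S0 then show ?case by (auto simp: sqsubeq_def)
next
  case (Do x c)
  then show ?case by (auto simp: sqsubeq_def)
qed

lemma uniq: "sqsubeq (Do a s) x \<Longrightarrow> sqsubeq (Do b s) x \<Longrightarrow> a = b"
proof -
  assume h: "sqsubeq (Do a s) x" "sqsubeq (Do b s) x"
  from total[OF h] have "sqsubeq (Do a s) (Do b s) \<or> sqsubeq (Do b s) (Do a s)" .
  then show "a = b"
    unfolding sqsubeq_def using sqsub_size[of "Do a s" s] sqsub_size[of "Do b s" s] by auto
qed

lemma Exec_mono: "Exec P t0 tm x \<Longrightarrow> sqsubeq y x \<Longrightarrow> Exec P t0 tm y"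
  unfolding Exec_def using sqsubeq_trans by blast

lemma sle_iff: "Exec P t0 tm x \<Longrightarrow> sle P t0 tm y x \<longleftrightarrow> sqsubeq y x"
  unfolding sle_def slt_def sqsubeq_def by auto

lemma endt_next: "Exec P t0 tm x \<Longrightarrow> sqsubeq (Do a s) x \<Longrightarrow> endt P t0 tm s x = tm a"
proof -
  assume e: "Exec P t0 tm x" and d: "sqsubeq (Do a s) x"
  have ne: "s \<noteq> x" using sqsub_Do[OF d] sqsub_irrefl by blast
  have "(THE b. sle P t0 tm (Do b s) x) = a"
    using d uniq sle_iff[OF e] by (intro the_equality) auto
  then show ?thesis using ne unfolding endt_def by simp
qed

lemma endt_none: "\<not> sqsubeq s x \<Longrightarrow> endt P t0 tm s x = tm (THE b. False)"
proof -
  assume n: "\<not> sqsubeq s x"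
  have "(\<lambda>b. sle P t0 tm (Do b s) x) = (\<lambda>b. False)"
    using n sqsub_Do unfolding sle_def slt_def sqsubeq_def by fastforce
  then show ?thesis using n unfolding endt_def sqsubeq_def by simp
qed

lemma start_le_endt: "Exec P t0 tm x \<Longrightarrow> sqsubeq s x \<Longrightarrow> start t0 tm s \<le> endt P t0 tm s x"
proof -
  assume e: "Exec P t0 tm x" and s: "sqsubeq s x"
  show ?thesis
  proof (cases "s = x")
    case True then show ?thesis unfolding endt_def by simp
  next
    case False
    then have "sqsub s x" using s unfolding sqsubeq_def by simp
    then obtain a where a: "sqsubeq (Do a s) x" using sqsub_ex by blast
    then show ?thesis using endt_next[OF e a] e a unfolding Exec_def by simp
  qed
qed

theorem lemma5p5:
  fixes Poss :: "'a \<Rightarrow> 'a sit \<Rightarrow> bool" and t0 :: real and tm :: "'a \<Rightarrow> real"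
    and phi :: "real \<Rightarrow> 'a sit \<Rightarrow> bool" and sigma sphi sstar :: "'a sit"
  assumes "CausalSetting Poss t0 tm phi sigma"
  shows "AchvSit Poss t0 tm phi sphi sigma \<and> slt Poss t0 tm sigma sstar \<and>
         (\<forall>s' t. sle Poss t0 tm sigma s' \<and> sle Poss t0 tm s' sstar \<and>
                 start t0 tm s' \<le> t \<and> t \<le> endt Poss t0 tm s' sstar \<longrightarrow> phi t s')
         \<longrightarrow> AchvSit Poss t0 tm phi sphi sstar"
proof (intro impI, elim conjE)
  assume A: "AchvSit Poss t0 tm phi sphi sigma" and L: "slt Poss t0 tm sigma sstar"
    and H: "\<forall>s' t. sle Poss t0 tm sigma s' \<and> sle Poss t0 tm s' sstar \<and>
                 start t0 tm s' \<le> t \<and> t \<le> endt Poss t0 tm s' sstar \<longrightarrow> phi t s'"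
  have es: "Exec Poss t0 tm sigma" and ps: "phi (start t0 tm sigma) sigma"
    using assms unfolding CausalSetting_def by auto
  have ex: "Exec Poss t0 tm sstar" and ss: "sqsub sigma sstar" using L unfolding slt_def by auto
  have sse: "sqsubeq sigma sstar" using ss unfolding sqsubeq_def by simp
  have sle_sig: "sle Poss t0 tm sigma s'" if "sqsubeq s' sstar" "sqsubeq sigma s'" for s'
    using that Exec_mono[OF ex] unfolding sle_def slt_def sqsubeq_def by auto
  have Hs: "phi t s'" if "sqsubeq s' sstar" "sqsubeq sigma s'" "start t0 tm s' \<le> t"
      "t \<le> endt Poss t0 tm s' sstar" for s' t
    using H sle_sig[OF that(1,2)] sle_iff[OF ex] that by blast
  have endeq: "endt Poss t0 tm s sstar = endt Poss t0 tm s sigma" if hs: "sqsub s sigma" for s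
  proof -
    obtain a where a: "sqsubeq (Do a s) sigma" using sqsub_ex[OF hs] by blast
    then have "sqsubeq (Do a s) sstar" using sqsubeq_trans sse by blast
    then show ?thesis using endt_next[OF ex] endt_next[OF es a] by simp
  qed
  have auxss: "AchvSitAux Poss t0 tm phi sigma sigma"
    unfolding AchvSitAux_def endt_def using ps sqsub_irrefl sqsub_trans
    unfolding slt_def sle_def by auto
  have B: "AchvSitAux Poss t0 tm phi x sstar" if ax: "AchvSitAux Poss t0 tm phi x sigma" for x
  proof -
    have p1: "phi (endt Poss t0 tm x sstar) x"
    proof (cases "sqsubeq x sstar")
      case False
      then have "\<not> sqsubeq x sigma" using sqsubeq_trans sse by blast
      then show ?thesis using ax False endt_none unfolding AchvSitAux_def by metis
    next
      case True
      then consider "sqsub x sigma" | "sqsubeq sigma x"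
        using total[OF True sse] unfolding sqsubeq_def by blast
      then show ?thesis
      proof cases
        case 1 then show ?thesis using ax endeq unfolding AchvSitAux_def by simp
      next
        case 2 then show ?thesis using Hs True start_le_endt[OF ex True] by blast
      qed
    qed
    have p2: "phi t s'" if "slt Poss t0 tm x s'" "sle Poss t0 tm s' sstar"
      "start t0 tm s' \<le> t" "t \<le> endt Poss t0 tm s' sstar" for s' t
    proof -
      have s1: "sqsubeq s' sstar" using that(2) sle_iff[OF ex] by blast
      then consider "sqsub s' sigma" | "sqsubeq sigma s'"
        using total[OF s1 sse] unfolding sqsubeq_def by blast
      then show ?thesis
      proof cases
        case 1
        have "sle Poss t0 tm s' sigma" using 1 sle_iff[OF es] unfolding sqsubeq_def by blast
        then show ?thesis using ax that endeq[OF 1] unfolding AchvSitAux_def by auto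
      next
        case 2 then show ?thesis using Hs s1 that by blast
      qed
    qed
    show ?thesis unfolding AchvSitAux_def using p1 p2 by blast
  qed
  have Aa: "AchvSitAux Poss t0 tm phi x sigma"
    if nx: "\<not> sqsub sigma x" and ax: "AchvSitAux Poss t0 tm phi x sstar" for x
  proof -
    have p1: "phi (endt Poss t0 tm x sigma) x"
    proof (cases "sqsubeq x sigma")
      case False
      have "\<not> sqsubeq x sstar"
      proof
        assume "sqsubeq x sstar"
        from total[OF this sse] False nx show False unfolding sqsubeq_def by auto
      qed
      then show ?thesis using ax False endt_none unfolding AchvSitAux_def by metis
    next
      case True
      then consider "sqsub x sigma" | "x = sigma" unfolding sqsubeq_def by blast
      then show ?thesis
      proof cases
        case 1 then show ?thesis using ax endeq unfolding AchvSitAux_def by simp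
      next
        case 2 then show ?thesis using ps unfolding endt_def by simp
      qed
    qed
    have p2: "phi t s'" if "slt Poss t0 tm x s'" "sle Poss t0 tm s' sigma"
      "start t0 tm s' \<le> t" "t \<le> endt Poss t0 tm s' sigma" for s' t
    proof -
      have s1: "sqsubeq s' sigma" using that(2) sle_iff[OF es] by blast
      then consider "sqsub s' sigma" | "s' = sigma" unfolding sqsubeq_def by blast
      then show ?thesis
      proof cases
        case 1
        have "sqsub s' sstar" using 1 ss sqsub_trans by blast
        then have "sle Poss t0 tm s' sstar" using sle_iff[OF ex] unfolding sqsubeq_def by blast
        then show ?thesis using ax that endeq[OF 1] unfolding AchvSitAux_def by auto
      next
        case 2
        have "endt Poss t0 tm s' sigma = start t0 tm s'" using 2 unfolding endt_def by simp
        then have "t \<le> endt Poss t0 tm s' sstar"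
          using 2 that(3,4) start_le_endt[OF ex sse] by simp
        moreover have "sle Poss t0 tm s' sstar" using 2 L unfolding sle_def by simp
        ultimately show ?thesis using ax that unfolding AchvSitAux_def by blast
      qed
    qed
    show ?thesis unfolding AchvSitAux_def using p1 p2 by blast
  qed
  have a1: "AchvSitAux Poss t0 tm phi sphi sstar" using B A unfolding AchvSit_def by blast
  have a2: "\<not> (\<exists>s''. slt Poss t0 tm s'' sphi \<and> AchvSitAux Poss t0 tm phi s'' sstar)"
  proof
    assume "\<exists>s''. slt Poss t0 tm s'' sphi \<and> AchvSitAux Poss t0 tm phi s'' sstar"
    then obtain s'' where s1: "slt Poss t0 tm s'' sphi" and s2: "AchvSitAux Poss t0 tm phi s'' sstar"
      by blast
    show False
    proof (cases "sqsub sigma s''")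
      case True
      then have "slt Poss t0 tm sigma sphi" using s1 sqsub_trans unfolding slt_def by blast
      then show False using A auxss unfolding AchvSit_def by blast
    next
      case False
      then show False using Aa[OF False s2] s1 A unfolding AchvSit_def by blast
    qed
  qed
  show "AchvSit Poss t0 tm phi sphi sstar" unfolding AchvSit_def using a1 a2 by blast
qed

end
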